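(* Let $H$ be a separable complex Hilbert space and let $\mathcal{U}$ be a unitary system on $H$. If $\psi_1,\psi_2\in\mathcal{W}(\mathcal{U})$, then $\psi_1+\lambda\psi_2\in\mathcal{RW}(\mathcal{U})$ for every complex scalar $\lambda$ with $|\lambda|\neq 1$. More generally, if $\psi_1,\psi_2\in\mathcal{RW}(\mathcal{U})$, then there are constants $b>a>0$ such that $\psi_1+\lambda\psi_2\in\mathcal{RW}(\mathcal{U})$ for all $\lambda\in\mathbb{C}$ with either $|\lambda|<a$ or $|\lambda|>b$.
   Context: A unitary system on $H$ is a collection $\mathcal{U}$ of unitary operators on $H$ containing the identity operator. A vector $\psi\in H$ is a complete wandering vector for $\mathcal{U}$ if $\{U\psi: U\in\mathcal{U}\}$ is an orthonormal set whose closed linear span is $H$; $\mathcal{W}(\mathcal{U})$ denotes the set of complete wandering vectors. A Riesz basis of a Hilbert space is the image of an orthonormal basis under a bounded invertible operator. A vector $\psi$ is a complete Riesz vector for $\mathcal{U}$ if $\{U\psi:U\in\mathcal{U}\}$ is a Riesz basis for its closed linear span and this closed linear span is $H$; $\mathcal{RW}(\mathcal{U})$ denotes the set of complete Riesz vectors. *)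

theory Defs
  imports "HOL-Analysis.Analysis"
begin

text \<open>HOL-Analysis only provides real inner product spaces, so we introduce
complex vector spaces, complex inner product spaces and complex Hilbert spaces
as type classes (following the usual axioms; inner product is conjugate-linear
in the first argument and linear in the second, and induces the norm).\<close>

class complex_vector = real_vector +
  fixes scaleC :: "complex \<Rightarrow> 'a \<Rightarrow> 'a" (infixr \<open>*\<^sub>C\<close> 75)
  assumes scaleC_add_right: "a *\<^sub>C (x + y) = a *\<^sub>C x + a *\<^sub>C y"
    and scaleC_add_left: "(a + b) *\<^sub>C x = a *\<^sub>C x + b *\<^sub>C x"
    and scaleC_scaleC: "a *\<^sub>C (b *\<^sub>C x) = (a * b) *\<^sub>C x"
    and scaleC_one: "1 *\<^sub>C x = x"
    and scaleR_scaleC: "scaleR r = scaleC (complex_of_real r)"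

class complex_inner = complex_vector + real_normed_vector +
  fixes cinner :: "'a \<Rightarrow> 'a \<Rightarrow> complex"
  assumes cinner_commute: "cinner x y = cnj (cinner y x)"
    and cinner_add_left: "cinner (x + y) z = cinner x z + cinner y z"
    and cinner_scaleC_left: "cinner (r *\<^sub>C x) y = cnj r * cinner x y"
    and cinner_ge_zero: "0 \<le> Re (cinner x x) \<and> Im (cinner x x) = 0"
    and cinner_eq_zero_iff: "cinner x x = 0 \<longleftrightarrow> x = 0"
    and norm_eq_sqrt_cinner: "norm x = sqrt (Re (cinner x x))"

class chilbert_space = complex_inner + complete_space

definition clinear :: "('a::complex_vector \<Rightarrow> 'b::complex_vector) \<Rightarrow> bool" where
  "clinear T \<longleftrightarrow> (\<forall>x y. T (x + y) = T x + T y) \<and> (\<forall>c x. T (c *\<^sub>C x) = c *\<^sub>C T x)"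

definition bounded_clinear_op :: "('a::complex_inner \<Rightarrow> 'b::complex_inner) \<Rightarrow> bool" where
  "bounded_clinear_op T \<longleftrightarrow> clinear T \<and> (\<exists>K. \<forall>x. norm (T x) \<le> K * norm x)"

definition bounded_invertible :: "('a::complex_inner \<Rightarrow> 'a) \<Rightarrow> bool" where
  "bounded_invertible T \<longleftrightarrow> bounded_clinear_op T \<and>
     (\<exists>S. bounded_clinear_op S \<and> S \<circ> T = id \<and> T \<circ> S = id)"

definition unitary :: "('a::complex_inner \<Rightarrow> 'a) \<Rightarrow> bool" where
  "unitary U \<longleftrightarrow> clinear U \<and> surj U \<and> (\<forall>x y. cinner (U x) (U y) = cinner x y)"

definition cspan :: "'a::complex_vector set \<Rightarrow> 'a set" where
  "cspan S = {y. \<exists>F c. finite F \<and> F \<subseteq> S \<and> y = (\<Sum>x\<in>F. c x *\<^sub>C x)}"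

definition orthonormal_family :: "'i set \<Rightarrow> ('i \<Rightarrow> 'a::complex_inner) \<Rightarrow> bool" where
  "orthonormal_family I e \<longleftrightarrow> (\<forall>i\<in>I. \<forall>j\<in>I. cinner (e i) (e j) = (if i = j then 1 else 0))"

definition onb_family :: "'i set \<Rightarrow> ('i \<Rightarrow> 'a::complex_inner) \<Rightarrow> bool" where
  "onb_family I e \<longleftrightarrow> orthonormal_family I e \<and> closure (cspan (e ` I)) = UNIV"

definition riesz_basis_family :: "'i set \<Rightarrow> ('i \<Rightarrow> 'a::complex_inner) \<Rightarrow> bool" where
  "riesz_basis_family I f \<longleftrightarrow>
     (\<exists>e T. onb_family I e \<and> bounded_invertible T \<and> (\<forall>i\<in>I. f i = T (e i)))"

definition unitary_system :: "('a::complex_inner \<Rightarrow> 'a) set \<Rightarrow> bool" where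
  "unitary_system \<U> \<longleftrightarrow> (\<forall>U\<in>\<U>. unitary U) \<and> id \<in> \<U>"

definition complete_wandering :: "('a::complex_inner \<Rightarrow> 'a) set \<Rightarrow> 'a set" where
  "complete_wandering \<U> = {\<psi>. orthonormal_family \<U> (\<lambda>U. U \<psi>) \<and> closure (cspan ((\<lambda>U. U \<psi>) ` \<U>)) = UNIV}"

definition complete_riesz :: "('a::complex_inner \<Rightarrow> 'a) set \<Rightarrow> 'a set" where
  "complete_riesz \<U> = {\<psi>. closure (cspan ((\<lambda>U. U \<psi>) ` \<U>)) = UNIV \<and> riesz_basis_family \<U> (\<lambda>U. U \<psi>)}"

end

theory Submission
  imports Defs
begin

lemma scaleC_zero_right[simp]: "a *\<^sub>C (0::'a::complex_vector) = 0"
proof -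
  have "a *\<^sub>C (0::'a) = a *\<^sub>C 0 + a *\<^sub>C 0" by (metis scaleC_add_right add_0)
  thus ?thesis by simp
qed

lemma scaleC_of_real: "complex_of_real r *\<^sub>C (x::'a::complex_vector) = r *\<^sub>R x"
  by (simp add: scaleR_scaleC)

lemma scaleC_zero_left[simp]: "0 *\<^sub>C (x::'a::complex_vector) = 0"
  using scaleC_of_real[of 0 x] by simp

lemma scaleC_one'[simp]: "1 *\<^sub>C (x::'a::complex_vector) = x"
  by (rule scaleC_one)

lemma scaleC_minus1: "(-1) *\<^sub>C (x::'a::complex_vector) = - x"
  using scaleC_of_real[of "-1" x] by simp

lemma scaleC_diff_left: "(a - b) *\<^sub>C (x::'a::complex_vector) = a *\<^sub>C x - b *\<^sub>C x"
  by (metis add_diff_cancel eq_diff_eq scaleC_add_left)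

lemma scaleC_diff_right: "a *\<^sub>C (x - y) = a *\<^sub>C x - a *\<^sub>C (y::'a::complex_vector)"
  by (metis add_diff_cancel eq_diff_eq scaleC_add_right)

lemma scaleC_sum_right: "a *\<^sub>C (\<Sum>i\<in>G. f i) = (\<Sum>i\<in>G. a *\<^sub>C (f i::'a::complex_vector))"
  using sum_comp_morphism[of "\<lambda>x. a *\<^sub>C x" f G] by (simp add: scaleC_add_right o_def)

lemma scaleC_real_comm: "a *\<^sub>C (r *\<^sub>R x) = r *\<^sub>R (a *\<^sub>C (x::'a::complex_vector))"
  by (simp add: scaleR_scaleC scaleC_scaleC mult.commute)

lemma clinear_linear: "clinear T \<Longrightarrow> linear T"
  unfolding clinear_def by (intro linearI) (auto simp: scaleR_scaleC)

lemma clinear_sum: "clinear T \<Longrightarrow> T (\<Sum>i\<in>G. f i) = (\<Sum>i\<in>G. T (f i))"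
  using linear_sum[OF clinear_linear] by (simp add: o_def)

lemma cinner_zero_left[simp]: "cinner 0 x = 0"
  using cinner_add_left[of 0 0 x] by simp

lemma cinner_add_right: "cinner z (x + y) = cinner z x + cinner z y"
  by (metis cinner_add_left cinner_commute complex_cnj_add)

lemma cinner_zero_right[simp]: "cinner x 0 = 0"
  using cinner_add_right[of x 0 0] by simp

lemma cinner_scaleC_right: "cinner z (r *\<^sub>C x) = r * cinner z x"
  by (metis cinner_commute cinner_scaleC_left complex_cnj_cnj complex_cnj_mult)

lemma cinner_sum_left: "cinner (\<Sum>i\<in>G. f i) z = (\<Sum>i\<in>G. cinner (f i) z)"
  using sum_comp_morphism[of "\<lambda>x. cinner x z" f G] by (simp add: cinner_add_left o_def)

lemma cinner_sum_right: "cinner z (\<Sum>i\<in>G. f i) = (\<Sum>i\<in>G. cinner z (f i))"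
  using sum_comp_morphism[of "\<lambda>x. cinner z x" f G] by (simp add: cinner_add_right o_def)

lemma norm_sq_cinner: "(norm x)^2 = Re (cinner x x)"
  using norm_eq_sqrt_cinner[of x] cinner_ge_zero[of x] by simp

lemma norm_scaleC: "norm (c *\<^sub>C (x::'a::complex_inner)) = cmod c * norm x"
proof -
  have e: "cinner (c *\<^sub>C x) (c *\<^sub>C x) = cnj c * c * cinner x x"
    by (simp add: cinner_scaleC_left cinner_scaleC_right)
  have "(norm (c *\<^sub>C x))^2 = Re (cnj c * c * cinner x x)"
    by (simp only: norm_sq_cinner e)
  also have "cnj c * c = complex_of_real ((cmod c)^2)"
    by (simp add: complex_norm_square mult.commute del: of_real_power)
  also have "Re (complex_of_real ((cmod c)^2) * cinner x x) = (cmod c)^2 * (norm x)^2"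
    by (simp add: norm_sq_cinner)
  finally have "(norm (c *\<^sub>C x))^2 = (cmod c * norm x)^2" by (simp add: power_mult_distrib)
  thus ?thesis by (simp add: power2_eq_iff_nonneg)
qed

lemma bounded_linear_scaleC: "bounded_linear (\<lambda>x::'a::complex_inner. c *\<^sub>C x)"
  by (rule bounded_linear_intro[where K="cmod c"])
     (auto simp: scaleC_add_right scaleC_real_comm norm_scaleC mult.commute)

lemma bcop_bounded_linear:
  assumes "bounded_clinear_op T" shows "bounded_linear T"
proof -
  obtain K where K: "\<forall>x. norm (T x) \<le> K * norm x" and l: "clinear T"
    using assms unfolding bounded_clinear_op_def by auto
  show ?thesis
    using clinear_linear[OF l] K
    by (intro bounded_linear_intro[where K=K]) (auto simp: linear_add linear_scale mult.commute)
qed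

lemma bcop_cont: "bounded_clinear_op T \<Longrightarrow> continuous_on S T"
  by (rule linear_continuous_on[OF bcop_bounded_linear])

lemma dense_eq:
  fixes f g :: "'a::topological_space \<Rightarrow> 'b::t2_space"
  assumes "continuous_on UNIV f" "continuous_on UNIV g" "closure D = UNIV"
    "\<And>x. x \<in> D \<Longrightarrow> f x = g x"
  shows "f x = g x"
proof -
  have "closure D \<subseteq> {x. f x = g x}"
    by (rule closure_minimal) (use assms closed_Collect_eq[OF assms(1,2)] in auto)
  thus ?thesis using assms(3) by auto
qed

lemma orth_inner_sum:
  assumes "orthonormal_family I e" "finite G" "G \<subseteq> I" "j \<in> I"
  shows "cinner (e j) (\<Sum>i\<in>G. d i *\<^sub>C e i) = (if j \<in> G then d j else 0)"
proof -
  have "cinner (e j) (\<Sum>i\<in>G. d i *\<^sub>C e i) = (\<Sum>i\<in>G. d i * cinner (e j) (e i))"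
    by (simp add: cinner_sum_right cinner_scaleC_right)
  also have "\<dots> = (\<Sum>i\<in>G. if j = i then d i else 0)"
    using assms unfolding orthonormal_family_def by (intro sum.cong) auto
  also have "\<dots> = (if j \<in> G then d j else 0)" using assms(2) by simp
  finally show ?thesis .
qed

lemma orth_gram:
  assumes "orthonormal_family I e" "finite G" "G \<subseteq> I"
  shows "cinner (\<Sum>i\<in>G. c i *\<^sub>C e i) (\<Sum>i\<in>G. d i *\<^sub>C e i) = (\<Sum>i\<in>G. cnj (c i) * d i)"
proof -
  have "cinner (\<Sum>i\<in>G. c i *\<^sub>C e i) (\<Sum>i\<in>G. d i *\<^sub>C e i)
      = (\<Sum>j\<in>G. cnj (c j) * cinner (e j) (\<Sum>i\<in>G. d i *\<^sub>C e i))"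
    by (simp add: cinner_sum_left cinner_scaleC_left)
  also have "\<dots> = (\<Sum>j\<in>G. cnj (c j) * d j)"
    using assms orth_inner_sum[OF assms] by (intro sum.cong) auto
  finally show ?thesis .
qed

lemma orth_norm_sum:
  assumes "orthonormal_family I e" "finite G" "G \<subseteq> I"
  shows "norm (\<Sum>i\<in>G. d i *\<^sub>C e i) = sqrt (Re (\<Sum>i\<in>G. cnj (d i) * d i))"
  using orth_gram[OF assms, of d d] by (simp add: norm_eq_sqrt_cinner)

definition onbmap :: "'i set \<Rightarrow> ('i \<Rightarrow> 'a::complex_inner) \<Rightarrow> ('i \<Rightarrow> 'b::complex_vector) \<Rightarrow> 'a \<Rightarrow> 'b" where
  "onbmap I e1 e2 x = (\<Sum>i\<in>{i\<in>I. cinner (e1 i) x \<noteq> 0}. cinner (e1 i) x *\<^sub>C e2 i)"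

lemma onbmap_sum:
  assumes "orthonormal_family I e1" "finite G" "G \<subseteq> I"
  shows "onbmap I e1 e2 (\<Sum>i\<in>G. d i *\<^sub>C e1 i) = (\<Sum>i\<in>G. d i *\<^sub>C e2 i)"
proof -
  let ?x = "\<Sum>i\<in>G. d i *\<^sub>C e1 i"
  have S: "{i\<in>I. cinner (e1 i) ?x \<noteq> 0} = {i\<in>G. d i \<noteq> 0}"
    using orth_inner_sum[OF assms] assms(3) by (auto split: if_splits)
  have "onbmap I e1 e2 ?x = (\<Sum>i\<in>{i\<in>G. d i \<noteq> 0}. d i *\<^sub>C e2 i)"
    unfolding onbmap_def S using orth_inner_sum[OF assms] assms(3)
    by (intro sum.cong) auto
  also have "\<dots> = (\<Sum>i\<in>G. d i *\<^sub>C e2 i)"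
    using assms(2) by (intro sum.mono_neutral_left) auto
  finally show ?thesis .
qed

definition Dset :: "'i set \<Rightarrow> ('i \<Rightarrow> 'a::complex_vector) \<Rightarrow> 'a set" where
  "Dset I e = {y. \<exists>G d. finite G \<and> G \<subseteq> I \<and> y = (\<Sum>i\<in>G. d i *\<^sub>C e i)}"

lemma sum_enlarge:
  assumes "finite K" "G \<subseteq> K"
  shows "(\<Sum>i\<in>G. d i *\<^sub>C (e i::'a::complex_vector)) = (\<Sum>i\<in>K. (if i \<in> G then d i else 0) *\<^sub>C e i)"
proof -
  have "(\<Sum>i\<in>K. (if i \<in> G then d i else 0) *\<^sub>C e i) = (\<Sum>i\<in>K. if i \<in> G then d i *\<^sub>C e i else 0)"
    by (intro sum.cong) auto
  also have "\<dots> = (\<Sum>i\<in>K \<inter> G. d i *\<^sub>C e i)" using sum.inter_restrict[OF assms(1)] by metis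
  also have "K \<inter> G = G" using assms by auto
  finally show ?thesis by simp
qed

lemma Dset_common:
  assumes "x \<in> Dset I e" "y \<in> Dset I e"
  obtains K c d where "finite K" "K \<subseteq> I" "x = (\<Sum>i\<in>K. c i *\<^sub>C e i)" "y = (\<Sum>i\<in>K. d i *\<^sub>C e i)"
proof -
  obtain G c where G: "finite G" "G \<subseteq> I" "x = (\<Sum>i\<in>G. c i *\<^sub>C e i)" using assms(1) unfolding Dset_def by auto
  obtain H d where H: "finite H" "H \<subseteq> I" "y = (\<Sum>i\<in>H. d i *\<^sub>C e i)" using assms(2) unfolding Dset_def by auto
  show ?thesis
    apply (rule that[of "G \<union> H" "\<lambda>i. if i \<in> G then c i else 0" "\<lambda>i. if i \<in> H then d i else 0"])
    using G H sum_enlarge[of "G \<union> H" G c e] sum_enlarge[of "G \<union> H" H d e] by auto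
qed

lemma sum_comb_add: "(\<Sum>i\<in>K. c i *\<^sub>C (e i::'a::complex_vector)) + (\<Sum>i\<in>K. d i *\<^sub>C e i) = (\<Sum>i\<in>K. (c i + d i) *\<^sub>C e i)"
  by (simp add: sum.distrib scaleC_add_left)

lemma sum_comb_diff: "(\<Sum>i\<in>K. c i *\<^sub>C (e i::'a::complex_vector)) - (\<Sum>i\<in>K. d i *\<^sub>C e i) = (\<Sum>i\<in>K. (c i - d i) *\<^sub>C e i)"
  by (simp add: sum_subtractf scaleC_diff_left)

lemma sum_comb_scale: "a *\<^sub>C (\<Sum>i\<in>K. c i *\<^sub>C (e i::'a::complex_vector)) = (\<Sum>i\<in>K. (a * c i) *\<^sub>C e i)"
  by (simp add: scaleC_sum_right scaleC_scaleC)

lemma cspan_sub_Dset: "cspan (e ` I) \<subseteq> Dset I e"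
proof
  fix y assume "y \<in> cspan (e ` I)"
  then obtain F c where F: "finite F" "F \<subseteq> e ` I" "y = (\<Sum>x\<in>F. c x *\<^sub>C x)" unfolding cspan_def by auto
  then obtain G where G: "G \<subseteq> I" "inj_on e G" "F = e ` G" by (auto simp: subset_image_inj)
  have "finite G" using F G finite_image_iff by metis
  moreover have "y = (\<Sum>i\<in>G. c (e i) *\<^sub>C e i)" using F G by (simp add: sum.reindex)
  ultimately show "y \<in> Dset I e" using G unfolding Dset_def by auto
qed

lemma Dset_in: "finite G \<Longrightarrow> G \<subseteq> I \<Longrightarrow> (\<Sum>i\<in>G. d i *\<^sub>C e i) \<in> Dset I e"
  unfolding Dset_def by auto

lemma ext_iso:
  fixes e1 e2 :: "'i \<Rightarrow> 'a::chilbert_space"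
  assumes o1: "orthonormal_family I e1" and o2: "orthonormal_family I e2"
    and d1: "closure (cspan (e1 ` I)) = UNIV"
  shows "\<exists>g. bounded_clinear_op g \<and> (\<forall>x. norm (g x) = norm x) \<and>
     (\<forall>G d. finite G \<and> G \<subseteq> I \<longrightarrow> g (\<Sum>i\<in>G. d i *\<^sub>C e1 i) = (\<Sum>i\<in>G. d i *\<^sub>C e2 i))"
proof -
  let ?D = "Dset I e1"
  let ?W = "onbmap I e1 e2"
  have cD: "closure ?D = UNIV" using d1 closure_mono[OF cspan_sub_Dset[of e1 I]] by auto
  have Wsum: "?W (\<Sum>i\<in>G. d i *\<^sub>C e1 i) = (\<Sum>i\<in>G. d i *\<^sub>C e2 i)" if "finite G" "G \<subseteq> I" for G d
    using onbmap_sum[OF o1 that] .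
  have Wadd: "?W (x + y) = ?W x + ?W y \<and> x + y \<in> ?D" if xy: "x \<in> ?D" "y \<in> ?D" for x y
  proof -
    obtain K c d where K: "finite K" "K \<subseteq> I" "x = (\<Sum>i\<in>K. c i *\<^sub>C e1 i)" "y = (\<Sum>i\<in>K. d i *\<^sub>C e1 i)"
      using Dset_common[OF xy] by metis
    show ?thesis using K Wsum[OF K(1,2)] Dset_in[OF K(1,2)] by (simp add: sum_comb_add)
  qed
  have Wdiff: "?W (x - y) = ?W x - ?W y \<and> x - y \<in> ?D" if xy: "x \<in> ?D" "y \<in> ?D" for x y
  proof -
    obtain K c d where K: "finite K" "K \<subseteq> I" "x = (\<Sum>i\<in>K. c i *\<^sub>C e1 i)" "y = (\<Sum>i\<in>K. d i *\<^sub>C e1 i)"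
      using Dset_common[OF xy] by metis
    show ?thesis using K Wsum[OF K(1,2)] Dset_in[OF K(1,2)] by (simp add: sum_comb_diff)
  qed
  have Wscale: "?W (a *\<^sub>C x) = a *\<^sub>C ?W x \<and> a *\<^sub>C x \<in> ?D" if xy: "x \<in> ?D" for x a
  proof -
    obtain K c where K: "finite K" "K \<subseteq> I" "x = (\<Sum>i\<in>K. c i *\<^sub>C e1 i)"
      using xy unfolding Dset_def by auto
    show ?thesis using K Wsum[OF K(1,2)] Dset_in[OF K(1,2)] by (simp add: sum_comb_scale)
  qed
  have Wnorm: "norm (?W x) = norm x" if xy: "x \<in> ?D" for x
  proof -
    obtain K c where K: "finite K" "K \<subseteq> I" "x = (\<Sum>i\<in>K. c i *\<^sub>C e1 i)"
      using xy unfolding Dset_def by auto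
    show ?thesis using K Wsum[OF K(1,2)] orth_norm_sum[OF o1 K(1,2)] orth_norm_sum[OF o2 K(1,2)] by simp
  qed
  have uc: "uniformly_continuous_on ?D ?W"
    unfolding uniformly_continuous_on_def
  proof (intro allI impI)
    fix \<epsilon> :: real assume "\<epsilon> > 0"
    show "\<exists>\<delta>>0. \<forall>x\<in>?D. \<forall>x'\<in>?D. dist x' x < \<delta> \<longrightarrow> dist (?W x') (?W x) < \<epsilon>"
      using \<open>\<epsilon> > 0\<close> Wdiff Wnorm by (intro exI[of _ \<epsilon>]) (metis dist_norm)
  qed
  obtain g where g1: "uniformly_continuous_on (closure ?D) g" and g2: "\<And>x. x \<in> ?D \<Longrightarrow> ?W x = g x"
    using uniformly_continuous_on_extension_on_closure[OF uc] by metis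
  have gc: "continuous_on UNIV g" using g1 cD uniformly_continuous_imp_continuous by fastforce
  have gnorm: "norm (g x) = norm x" for x
    by (rule dense_eq[OF continuous_on_norm[OF gc] continuous_on_norm[OF continuous_on_id] cD])
       (metis Wnorm g2)
  have gadd1: "g (x + y) = g x + g y" if "y \<in> ?D" for x y
    by (rule dense_eq[OF continuous_on_compose2[OF gc, of UNIV "\<lambda>x. x + y"] _ cD])
       (auto intro!: continuous_intros gc simp: Wadd g2[symmetric] that)
  have gadd: "g (x + y) = g x + g y" for x y
    by (rule dense_eq[OF continuous_on_compose2[OF gc, of UNIV "\<lambda>y. x + y"] _ cD])
       (auto intro!: continuous_intros gc simp: gadd1)
  have gscale: "g (a *\<^sub>C x) = a *\<^sub>C g x" for a x
    by (rule dense_eq[OF continuous_on_compose2[OF gc, of UNIV "\<lambda>x. a *\<^sub>C x"] 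
          continuous_on_compose2[OF linear_continuous_on[OF bounded_linear_scaleC] gc] cD])
       (auto intro!: linear_continuous_on bounded_linear_scaleC simp: Wscale g2[symmetric])
  have "bounded_clinear_op g"
    unfolding bounded_clinear_op_def clinear_def using gadd gscale gnorm
    by (auto intro!: exI[of _ 1])
  moreover have "g (\<Sum>i\<in>G. d i *\<^sub>C e1 i) = (\<Sum>i\<in>G. d i *\<^sub>C e2 i)" if "finite G" "G \<subseteq> I" for G d
    using g2[OF Dset_in[OF that]] Wsum[OF that] by simp
  ultimately show ?thesis using gnorm by blast
qed

lemma onb_iso:
  fixes e1 e2 :: "'i \<Rightarrow> 'a::chilbert_space"
  assumes "onb_family I e1" "onb_family I e2"
  shows "\<exists>W W'. bounded_clinear_op W \<and> bounded_clinear_op W' \<and> (\<forall>x. norm (W x) = norm x) \<and>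
     (\<forall>x. norm (W' x) = norm x) \<and> (\<forall>x. W' (W x) = x) \<and> (\<forall>x. W (W' x) = x) \<and> (\<forall>i\<in>I. W (e1 i) = e2 i)"
proof -
  have o1: "orthonormal_family I e1" and d1: "closure (cspan (e1 ` I)) = UNIV"
   and o2: "orthonormal_family I e2" and d2: "closure (cspan (e2 ` I)) = UNIV"
    using assms unfolding onb_family_def by auto
  obtain g where g: "bounded_clinear_op g" "\<forall>x. norm (g x) = norm x"
     "\<forall>G d. finite G \<and> G \<subseteq> I \<longrightarrow> g (\<Sum>i\<in>G. d i *\<^sub>C e1 i) = (\<Sum>i\<in>G. d i *\<^sub>C e2 i)"
    using ext_iso[OF o1 o2 d1] by (elim exE conjE) assumption
  obtain g' where g': "bounded_clinear_op g'" "\<forall>x. norm (g' x) = norm x"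
     "\<forall>G d. finite G \<and> G \<subseteq> I \<longrightarrow> g' (\<Sum>i\<in>G. d i *\<^sub>C e2 i) = (\<Sum>i\<in>G. d i *\<^sub>C e1 i)"
    using ext_iso[OF o2 o1 d2] by (elim exE conjE) assumption
  have cD1: "closure (Dset I e1) = UNIV" using d1 closure_mono[OF cspan_sub_Dset[of e1 I]] by auto
  have cD2: "closure (Dset I e2) = UNIV" using d2 closure_mono[OF cspan_sub_Dset[of e2 I]] by auto
  have gc: "continuous_on UNIV g" "continuous_on UNIV g'" by (rule bcop_cont[OF g(1)], rule bcop_cont[OF g'(1)])
  have gc1: "continuous_on UNIV (\<lambda>x. g' (g x))" "continuous_on UNIV (\<lambda>x. g (g' x))"
    by (rule continuous_on_compose2[OF gc(2) gc(1)], simp) (rule continuous_on_compose2[OF gc(1) gc(2)], simp)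
  have inv1: "g' (g x) = x" for x
  proof (rule dense_eq[OF gc1(1) continuous_on_id cD1])
    fix x assume "x \<in> Dset I e1"
    then obtain G d where G: "finite G" "G \<subseteq> I" "x = (\<Sum>i\<in>G. d i *\<^sub>C e1 i)"
      unfolding Dset_def by blast
    show "g' (g x) = x" using g(3)[rule_format, OF conjI[OF G(1,2)]] g'(3)[rule_format, OF conjI[OF G(1,2)]] G(3)
      by simp
  qed
  have inv2: "g (g' x) = x" for x
  proof (rule dense_eq[OF gc1(2) continuous_on_id cD2])
    fix x assume "x \<in> Dset I e2"
    then obtain G d where G: "finite G" "G \<subseteq> I" "x = (\<Sum>i\<in>G. d i *\<^sub>C e2 i)"
      unfolding Dset_def by blast
    show "g (g' x) = x" using g(3)[rule_format, OF conjI[OF G(1,2)]] g'(3)[rule_format, OF conjI[OF G(1,2)]] G(3)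
      by simp
  qed
  have "g (e1 i) = e2 i" if "i \<in> I" for i
    using g(3)[rule_format, of "{i}" "\<lambda>_. 1"] that by simp
  hence "\<forall>i\<in>I. g (e1 i) = e2 i" by blast
  thus ?thesis using g(1,2) g'(1,2) inv1 inv2 by (intro exI[of _ g] exI[of _ g'] conjI allI) auto
qed

lemma inv_clinear:
  assumes "clinear T" "\<And>x. S (T x) = x" "\<And>y. T (S y) = y"
  shows "clinear S"
  unfolding clinear_def
proof (intro conjI allI)
  fix x y
  have "S (x + y) = S (T (S x) + T (S y))" by (simp add: assms(3))
  also have "\<dots> = S (T (S x + S y))" using assms(1) unfolding clinear_def by simp
  finally show "S (x + y) = S x + S y" by (simp add: assms(2))
next
  fix c x
  have "S (c *\<^sub>C x) = S (c *\<^sub>C T (S x))" by (simp add: assms(3))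
  also have "\<dots> = S (T (c *\<^sub>C S x))" using assms(1) unfolding clinear_def by simp
  finally show "S (c *\<^sub>C x) = c *\<^sub>C S x" by (simp add: assms(2))
qed

lemma bcop_bound: "bounded_clinear_op T \<Longrightarrow> \<exists>K\<ge>0. \<forall>x. norm (T x) \<le> K * norm x"
proof -
  assume "bounded_clinear_op T"
  then obtain K where K: "\<forall>x. norm (T x) \<le> K * norm x" unfolding bounded_clinear_op_def by blast
  have "norm (T x) \<le> max K 0 * norm x" for x
    using K[rule_format, of x] mult_right_mono[of K "max K 0" "norm x"] by auto
  thus ?thesis by (intro exI[of _ "max K 0"]) auto
qed

lemma bcop_comp:
  assumes "bounded_clinear_op A" "bounded_clinear_op B"
  shows "bounded_clinear_op (A \<circ> B)"
proof -
  obtain KA where KA: "KA \<ge> 0" "\<forall>x. norm (A x) \<le> KA * norm x" using bcop_bound[OF assms(1)] by blast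
  obtain KB where KB: "\<forall>x. norm (B x) \<le> KB * norm x" using assms(2) unfolding bounded_clinear_op_def by blast
  have "norm (A (B x)) \<le> (KA * KB) * norm x" for x
  proof -
    have "norm (A (B x)) \<le> KA * norm (B x)" using KA by auto
    also have "\<dots> \<le> KA * (KB * norm x)" using KA KB by (intro mult_left_mono) auto
    finally show ?thesis by (simp add: mult.assoc)
  qed
  thus ?thesis using assms unfolding bounded_clinear_op_def clinear_def by auto
qed

lemma bi_comp:
  assumes "bounded_invertible A" "bounded_invertible B"
  shows "bounded_invertible (A \<circ> B)"
proof -
  obtain SA where SA: "bounded_clinear_op SA" "SA \<circ> A = id" "A \<circ> SA = id" "bounded_clinear_op A"
    using assms(1) unfolding bounded_invertible_def by blast
  obtain SB where SB: "bounded_clinear_op SB" "SB \<circ> B = id" "B \<circ> SB = id" "bounded_clinear_op B"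
    using assms(2) unfolding bounded_invertible_def by blast
  have "\<forall>x. SA (A x) = x" "\<forall>x. A (SA x) = x" "\<forall>x. SB (B x) = x" "\<forall>x. B (SB x) = x"
    using SA(2,3) SB(2,3) by (simp_all add: fun_eq_iff)
  hence "(SB \<circ> SA) \<circ> (A \<circ> B) = id" "(A \<circ> B) \<circ> (SB \<circ> SA) = id"
    by (simp_all add: fun_eq_iff)
  thus ?thesis using SA SB bcop_comp unfolding bounded_invertible_def by blast
qed

lemma bi_id: "bounded_invertible (id :: 'a::complex_inner \<Rightarrow> 'a)"
  unfolding bounded_invertible_def bounded_clinear_op_def clinear_def
  by (auto intro!: exI[of _ 1] exI[of _ id])

lemma bcop_scale:
  assumes "bounded_clinear_op A" shows "bounded_clinear_op (\<lambda>x. c *\<^sub>C A x)"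
proof -
  obtain K where K: "K \<ge> 0" "\<forall>x. norm (A x) \<le> K * norm x" using bcop_bound[OF assms] by blast
  have b: "\<forall>x. norm (c *\<^sub>C A x) \<le> (cmod c * K) * norm x"
    using K by (simp add: norm_scaleC mult.assoc mult_left_mono)
  have "clinear (\<lambda>x. c *\<^sub>C A x)" using assms unfolding bounded_clinear_op_def clinear_def
    by (auto simp: scaleC_add_right scaleC_scaleC mult.commute)
  thus ?thesis using b unfolding bounded_clinear_op_def by blast
qed

lemma bi_scale:
  assumes "bounded_invertible A" "c \<noteq> 0"
  shows "bounded_invertible (\<lambda>x. c *\<^sub>C A x)"
proof -
  obtain S where S: "bounded_clinear_op S" "S \<circ> A = id" "A \<circ> S = id" "bounded_clinear_op A"
    using assms(1) unfolding bounded_invertible_def by blast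
  have lS: "clinear S" using S(1) unfolding bounded_clinear_op_def by auto
  have lA: "clinear A" using S(4) unfolding bounded_clinear_op_def by auto
  have i1: "\<forall>x. S (A x) = x" "\<forall>x. A (S x) = x"
    using S(2,3) by (simp_all add: fun_eq_iff)
  have "(\<lambda>x. inverse c *\<^sub>C S x) \<circ> (\<lambda>x. c *\<^sub>C A x) = id"
    using i1 lS assms(2) unfolding clinear_def by (simp add: fun_eq_iff scaleC_scaleC)
  moreover have "(\<lambda>x. c *\<^sub>C A x) \<circ> (\<lambda>x. inverse c *\<^sub>C S x) = id"
    using i1 lA assms(2) unfolding clinear_def by (simp add: fun_eq_iff scaleC_scaleC)
  ultimately show ?thesis using bcop_scale S unfolding bounded_invertible_def by blast
qed

lemma neumann:
  fixes B :: "'a::chilbert_space \<Rightarrow> 'a"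
  assumes lB: "clinear B" and kB: "\<forall>x. norm (B x) \<le> k * norm x" and k: "0 \<le> k" "k < 1"
  shows "bounded_invertible (\<lambda>x. x + B x)"
proof -
  have lin: "linear B" by (rule clinear_linear[OF lB])
  have fx: "\<exists>!x. y - B x = x" for y
  proof (rule banach_fix_type[OF k])
    show "\<forall>x z. dist (y - B x) (y - B z) \<le> k * dist x z"
    proof (intro allI)
      fix x z
      have "dist (y - B x) (y - B z) = norm (B (z - x))"
        by (simp add: dist_norm linear_diff[OF lin])
      also have "\<dots> \<le> k * norm (z - x)" using kB by auto
      finally show "dist (y - B x) (y - B z) \<le> k * dist x z" by (simp add: dist_norm norm_minus_commute)
    qed
  qed
  define S where "S y = (THE x. y - B x = x)" for y
  have S1: "y - B (S y) = S y" for y unfolding S_def using theI'[OF fx] .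
  have S2: "S (x + B x) = x" for x unfolding S_def by (rule the1_equality[OF fx]) simp
  have TS: "S y + B (S y) = y" for y using S1[of y] by (metis add.commute diff_add_cancel)
  have lT: "clinear (\<lambda>x. x + B x)"
    using lB unfolding clinear_def by (auto simp: scaleC_add_right algebra_simps)
  have lS: "clinear S" by (rule inv_clinear[OF lT]) (auto simp: S2 TS)
  have bS: "norm (S y) \<le> (1 / (1 - k)) * norm y" for y
  proof -
    have "norm (S y) \<le> norm y + norm (B (S y))" using S1[of y] by (metis norm_triangle_ineq4)
    also have "\<dots> \<le> norm y + k * norm (S y)" using kB by auto
    finally have "(1 - k) * norm (S y) \<le> norm y" by (simp add: algebra_simps)
    thus ?thesis using k by (simp add: field_simps)
  qed
  have bT: "norm (x + B x) \<le> (1 + k) * norm x" for x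
    using norm_triangle_ineq[of x "B x"] kB[rule_format, of x] by (simp add: algebra_simps)
  have b1: "bounded_clinear_op (\<lambda>x. x + B x)" unfolding bounded_clinear_op_def
    using lT bT by blast
  have b2: "bounded_clinear_op S" unfolding bounded_clinear_op_def
    using lS bS by blast
  have c1: "S \<circ> (\<lambda>x. x + B x) = id" "(\<lambda>x. x + B x) \<circ> S = id"
    using S2 TS by (simp_all add: fun_eq_iff)
  show ?thesis unfolding bounded_invertible_def using b1 b2 c1 by blast
qed

lemma perturb:
  fixes A :: "'a::chilbert_space \<Rightarrow> 'a"
  assumes "bounded_clinear_op A" "bounded_clinear_op S" "\<forall>x. S (A x) = x" "\<forall>x. A (S x) = x"
    "\<forall>x. norm (A x) \<le> KA * norm x" "\<forall>x. norm (S x) \<le> KS * norm x" "KA \<ge> 0" "KS \<ge> 0"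
    "cmod l * KA < 1 \<or> KS < cmod l"
  shows "bounded_invertible (\<lambda>x. x + l *\<^sub>C A x)"
proof -
  have lA: "clinear A" and lS: "clinear S" using assms unfolding bounded_clinear_op_def by auto
  show ?thesis
  proof (cases "cmod l * KA < 1")
    case True
    show ?thesis
    proof (rule neumann[where k="cmod l * KA"])
      show "clinear (\<lambda>x. l *\<^sub>C A x)" using lA unfolding clinear_def
        by (auto simp: scaleC_add_right scaleC_scaleC mult.commute)
      show "\<forall>x. norm (l *\<^sub>C A x) \<le> cmod l * KA * norm x"
        using assms(5) by (simp add: norm_scaleC mult.assoc mult_left_mono)
    qed (use True assms in auto)
  next
    case False
    hence lt: "KS < cmod l" using assms by auto
    hence l0: "l \<noteq> 0" using assms by auto
    have biA: "bounded_invertible A" unfolding bounded_invertible_def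
      using assms by (auto simp: fun_eq_iff intro!: exI[of _ S])
    have N: "bounded_invertible (\<lambda>x. x + inverse l *\<^sub>C S x)"
    proof (rule neumann[where k="KS / cmod l"])
      show "clinear (\<lambda>x. inverse l *\<^sub>C S x)" using lS unfolding clinear_def
        by (auto simp: scaleC_add_right scaleC_scaleC mult.commute)
      show "\<forall>x. norm (inverse l *\<^sub>C S x) \<le> KS / cmod l * norm x"
      proof
        fix x
        have "norm (inverse l *\<^sub>C S x) = norm (S x) / cmod l" by (simp add: norm_scaleC norm_inverse divide_inverse mult.commute)
        also have "\<dots> \<le> KS * norm x / cmod l" using assms(6) l0 by (simp add: divide_right_mono)
        finally show "norm (inverse l *\<^sub>C S x) \<le> KS / cmod l * norm x" by simp
      qed
    qed (use lt assms l0 in auto)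
    have eq: "(\<lambda>x. x + l *\<^sub>C A x) = (\<lambda>x. l *\<^sub>C A x) \<circ> (\<lambda>x. x + inverse l *\<^sub>C S x)"
      using lA assms(4) l0 unfolding clinear_def
      by (auto simp: fun_eq_iff scaleC_add_right scaleC_scaleC add.commute)
    show ?thesis unfolding eq by (rule bi_comp[OF bi_scale[OF biA l0] N])
  qed
qed

lemma cspan_image:
  assumes "clinear T" "inj T"
  shows "T ` cspan S \<subseteq> cspan (T ` S)"
proof
  fix z assume "z \<in> T ` cspan S"
  then obtain F c where F: "finite F" "F \<subseteq> S" "z = T (\<Sum>x\<in>F. c x *\<^sub>C x)"
    unfolding cspan_def by auto
  have "z = (\<Sum>x\<in>F. T (c x *\<^sub>C x))" unfolding F(3) by (rule clinear_sum[OF assms(1)])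
  also have "\<dots> = (\<Sum>x\<in>F. c x *\<^sub>C T x)" using assms(1) unfolding clinear_def by simp
  also have "\<dots> = (\<Sum>y\<in>T ` F. c (inv T y) *\<^sub>C y)"
    by (subst sum.reindex[OF inj_on_subset[OF assms(2) subset_UNIV]]) (simp add: inv_f_f[OF assms(2)])
  finally have "z = (\<Sum>y\<in>T ` F. c (inv T y) *\<^sub>C y)" .
  moreover have "finite (T ` F)" "T ` F \<subseteq> T ` S" using F by auto
  ultimately show "z \<in> cspan (T ` S)" unfolding cspan_def
    by (intro CollectI exI[of _ "T ` F"] exI[of _ "\<lambda>y. c (inv T y)"]) simp
qed

lemma span_img:
  assumes "bounded_invertible T" "closure (cspan S) = UNIV"
  shows "closure (cspan (T ` S)) = UNIV"
proof -
  obtain R where R: "bounded_clinear_op T" "R \<circ> T = id" "T \<circ> R = id"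
    using assms(1) unfolding bounded_invertible_def by blast
  have i1: "\<forall>x. R (T x) = x" "\<forall>x. T (R x) = x"
    using R(2,3) by (simp_all add: fun_eq_iff)
  have inj: "inj T" by (rule injI) (metis i1(1))
  have sj: "T ` UNIV = UNIV" by (rule surjI[of T R]) (use i1 in auto)
  have lT: "clinear T" using R(1) unfolding bounded_clinear_op_def by auto
  have "UNIV = T ` closure (cspan S)" using sj assms(2) by simp
  also have "\<dots> \<subseteq> closure (T ` cspan S)"
    by (rule closure_bounded_linear_image_subset[OF bcop_bounded_linear[OF R(1)]])
  also have "\<dots> \<subseteq> closure (cspan (T ` S))" by (rule closure_mono[OF cspan_image[OF lT inj]])
  finally show ?thesis by auto
qed

lemma main_riesz:
  fixes \<U> :: "('a::chilbert_space \<Rightarrow> 'a) set"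
  assumes "unitary_system \<U>" "riesz_basis_family \<U> (\<lambda>U. U \<psi>1)" "\<forall>U\<in>\<U>. A (U \<psi>1) = U \<psi>2"
    "bounded_invertible (\<lambda>x. x + l *\<^sub>C A x)"
  shows "\<psi>1 + l *\<^sub>C \<psi>2 \<in> complete_riesz \<U>"
proof -
  obtain e T1 where e: "onb_family \<U> e" "bounded_invertible T1" "\<forall>U\<in>\<U>. U \<psi>1 = T1 (e U)"
    using assms(2) unfolding riesz_basis_family_def by blast
  define T where "T = (\<lambda>x. x + l *\<^sub>C A x) \<circ> T1"
  have bT: "bounded_invertible T" unfolding T_def using bi_comp[OF assms(4) e(2)] .
  have fam: "U (\<psi>1 + l *\<^sub>C \<psi>2) = T (e U)" if "U \<in> \<U>" for U
  proof -
    have "clinear U" using assms(1) that unfolding unitary_system_def unitary_def by blast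
    hence "U (\<psi>1 + l *\<^sub>C \<psi>2) = U \<psi>1 + l *\<^sub>C U \<psi>2" unfolding clinear_def by simp
    also have "\<dots> = U \<psi>1 + l *\<^sub>C A (U \<psi>1)" using assms(3) that by simp
    also have "\<dots> = T (e U)" using e(3) that unfolding T_def by simp
    finally show ?thesis .
  qed
  have img: "(\<lambda>U. U (\<psi>1 + l *\<^sub>C \<psi>2)) ` \<U> = T ` (e ` \<U>)"
  proof -
    have "(\<lambda>U. U (\<psi>1 + l *\<^sub>C \<psi>2)) ` \<U> = (\<lambda>U. T (e U)) ` \<U>"
      by (rule image_cong) (simp_all add: fam)
    thus ?thesis by (simp add: image_image)
  qed
  have "closure (cspan (T ` (e ` \<U>))) = UNIV"
    by (rule span_img[OF bT]) (use e(1) in \<open>simp add: onb_family_def\<close>)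
  moreover have "riesz_basis_family \<U> (\<lambda>U. U (\<psi>1 + l *\<^sub>C \<psi>2))"
    unfolding riesz_basis_family_def
    by (intro exI[of _ e] exI[of _ T] conjI e(1) bT) (simp add: fam)
  ultimately show ?thesis unfolding complete_riesz_def using img by simp
qed

theorem proposition3:
  fixes \<U> :: "('a::chilbert_space \<Rightarrow> 'a) set"
  assumes "separable_space (euclidean :: 'a topology)"
    and "unitary_system \<U>"
  shows "(\<forall>\<psi>1 \<psi>2. \<psi>1 \<in> complete_wandering \<U> \<and> \<psi>2 \<in> complete_wandering \<U> \<longrightarrow>
            (\<forall>l::complex. cmod l \<noteq> 1 \<longrightarrow> \<psi>1 + l *\<^sub>C \<psi>2 \<in> complete_riesz \<U>))
       \<and> (\<forall>\<psi>1 \<psi>2. \<psi>1 \<in> complete_riesz \<U> \<and> \<psi>2 \<in> complete_riesz \<U> \<longrightarrow>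
            (\<exists>a b::real. 0 < a \<and> a < b \<and>
               (\<forall>l::complex. cmod l < a \<or> cmod l > b \<longrightarrow> \<psi>1 + l *\<^sub>C \<psi>2 \<in> complete_riesz \<U>)))"
proof (intro conjI allI impI)
  fix \<psi>1 \<psi>2 :: 'a and l :: complex
  assume w: "\<psi>1 \<in> complete_wandering \<U> \<and> \<psi>2 \<in> complete_wandering \<U>" and l: "cmod l \<noteq> 1"
  have o1: "onb_family \<U> (\<lambda>U. U \<psi>1)" and o2: "onb_family \<U> (\<lambda>U. U \<psi>2)"
    using w unfolding complete_wandering_def onb_family_def by auto
  obtain W W' where W: "bounded_clinear_op W" "bounded_clinear_op W'" "\<forall>x. norm (W x) = norm x"
     "\<forall>x. norm (W' x) = norm x" "\<forall>x. W' (W x) = x" "\<forall>x. W (W' x) = x" "\<forall>U\<in>\<U>. W (U \<psi>1) = U \<psi>2"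
    using onb_iso[OF o1 o2] by (elim exE conjE) assumption
  have l': "cmod l * 1 < 1 \<or> 1 < cmod l" using l by auto
  have N: "bounded_invertible (\<lambda>x. x + l *\<^sub>C W x)"
    by (rule perturb[OF W(1,2,5,6) _ _ _ _ l']) (use W(3,4) in auto)
  have r1: "riesz_basis_family \<U> (\<lambda>U. U \<psi>1)"
    unfolding riesz_basis_family_def
    by (intro exI[of _ "\<lambda>U. U \<psi>1"] exI[of _ id] conjI o1 bi_id) simp
  show "\<psi>1 + l *\<^sub>C \<psi>2 \<in> complete_riesz \<U>"
    by (rule main_riesz[OF assms(2) r1 W(7) N])
next
  fix \<psi>1 \<psi>2 :: 'a
  assume r: "\<psi>1 \<in> complete_riesz \<U> \<and> \<psi>2 \<in> complete_riesz \<U>"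
  have r1: "riesz_basis_family \<U> (\<lambda>U. U \<psi>1)" and r2: "riesz_basis_family \<U> (\<lambda>U. U \<psi>2)"
    using r unfolding complete_riesz_def by auto
  obtain e1 T1 where e1: "onb_family \<U> e1" "bounded_invertible T1" "\<forall>U\<in>\<U>. U \<psi>1 = T1 (e1 U)"
    using r1 unfolding riesz_basis_family_def by blast
  obtain e2 T2 where e2: "onb_family \<U> e2" "bounded_invertible T2" "\<forall>U\<in>\<U>. U \<psi>2 = T2 (e2 U)"
    using r2 unfolding riesz_basis_family_def by blast
  obtain S1 where S1: "bounded_clinear_op T1" "bounded_clinear_op S1" "S1 \<circ> T1 = id" "T1 \<circ> S1 = id"
    using e1(2) unfolding bounded_invertible_def by blast
  obtain S2 where S2: "bounded_clinear_op T2" "bounded_clinear_op S2" "S2 \<circ> T2 = id" "T2 \<circ> S2 = id"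
    using e2(2) unfolding bounded_invertible_def by blast
  have i1: "\<forall>x. S1 (T1 x) = x" "\<forall>x. T1 (S1 x) = x" using S1(3,4) by (simp_all add: fun_eq_iff)
  have i2: "\<forall>x. S2 (T2 x) = x" "\<forall>x. T2 (S2 x) = x" using S2(3,4) by (simp_all add: fun_eq_iff)
  obtain W W' where W: "bounded_clinear_op W" "bounded_clinear_op W'" "\<forall>x. norm (W x) = norm x"
     "\<forall>x. norm (W' x) = norm x" "\<forall>x. W' (W x) = x" "\<forall>x. W (W' x) = x" "\<forall>U\<in>\<U>. W (e1 U) = e2 U"
    using onb_iso[OF e1(1) e2(1)] by (elim exE conjE) assumption
  define A where "A = T2 \<circ> (W \<circ> S1)"
  define S where "S = T1 \<circ> (W' \<circ> S2)"
  have bA: "bounded_clinear_op A" unfolding A_def by (intro bcop_comp S1 S2 W)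
  have bS: "bounded_clinear_op S" unfolding S_def by (intro bcop_comp S1 S2 W)
  have SA: "\<forall>x. S (A x) = x" "\<forall>x. A (S x) = x" unfolding A_def S_def using i1 i2 W(5,6) by simp_all
  have AU: "\<forall>U\<in>\<U>. A (U \<psi>1) = U \<psi>2" unfolding A_def using e1(3) e2(3) i1 W(7) by auto
  obtain KA where KA: "KA \<ge> 0" "\<forall>x. norm (A x) \<le> KA * norm x" using bcop_bound[OF bA] by blast
  obtain KS where KS: "KS \<ge> 0" "\<forall>x. norm (S x) \<le> KS * norm x" using bcop_bound[OF bS] by blast
  define a where "a = 1 / (KA + 1)"
  define b where "b = KS + 2"
  have a0: "0 < a" unfolding a_def using KA by simp
  have a1: "a \<le> 1" unfolding a_def using KA by simp
  have ab: "a < b" using a1 KS unfolding b_def by simp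
  have "\<forall>l::complex. cmod l < a \<or> cmod l > b \<longrightarrow> \<psi>1 + l *\<^sub>C \<psi>2 \<in> complete_riesz \<U>"
  proof (intro allI impI)
    fix l :: complex assume la: "cmod l < a \<or> cmod l > b"
    have cond: "cmod l * KA < 1 \<or> KS < cmod l"
    proof (cases "cmod l < a")
      case True
      have "cmod l * KA \<le> a * KA" using True KA by (intro mult_right_mono) auto
      also have "a * KA = KA / (KA + 1)" unfolding a_def by simp
      also have "\<dots> < 1" using KA by simp
      finally show ?thesis by simp
    next
      case False
      thus ?thesis using la unfolding b_def by simp
    qed
    have N: "bounded_invertible (\<lambda>x. x + l *\<^sub>C A x)"
      by (rule perturb[OF bA bS SA(1) SA(2) KA(2) KS(2) KA(1) KS(1) cond])
    show "\<psi>1 + l *\<^sub>C \<psi>2 \<in> complete_riesz \<U>"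
      by (rule main_riesz[OF assms(2) r1 AU N])
  qed
  thus "\<exists>a b::real. 0 < a \<and> a < b \<and>
               (\<forall>l::complex. cmod l < a \<or> cmod l > b \<longrightarrow> \<psi>1 + l *\<^sub>C \<psi>2 \<in> complete_riesz \<U>)"
    using a0 ab by blast
qed

end
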